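(* Let $\gamma\in\mathcal{M}_k\otimes\mathcal{M}_m$ be a pure state, i.e., a state of rank $1$. Then $\gamma\in CR_{k,m}$ if and only if $\gamma$ is separable, i.e., $\gamma=vv^*$ with $v=a\otimes b$ for some $a\in\mathbb{C}^k$, $b\in\mathbb{C}^m$.
   Context: $\mathcal{M}_k$ denotes the complex $k\times k$ matrices, and $\mathcal{M}_k\otimes\mathcal{M}_m$ is identified with $\mathcal{M}_{km}$ via the Kronecker product. A state is a positive semidefinite Hermitian matrix (not necessarily of trace one). For $\gamma=\sum_{i=1}^nA_i\otimes B_i\in\mathcal{M}_k\otimes\mathcal{M}_m$ define $G_\gamma:\mathcal{M}_k\to\mathcal{M}_m$, $G_\gamma(X)=\sum_i\mathrm{tr}(A_iX)B_i$, and $F_\gamma:\mathcal{M}_m\to\mathcal{M}_k$, $F_\gamma(Y)=\sum_i\mathrm{tr}(B_iY)A_i$. A linear map is positive if it maps positive semidefinite matrices to positive semidefinite matrices, and self-adjoint if self-adjoint with respect to $\langle X,Y\rangle=\mathrm{tr}(XY^* )$. For orthogonal projections $V,W$, $V\mathcal{M}_kW=\{VXW:X\in\mathcal{M}_k\}$. Given an orthogonal projection $V\in\mathcal{M}_k$ and a positive map $T:V\mathcal{M}_kV\to V\mathcal{M}_kV$, $T$ is irreducible if the only orthogonal projections $W$ with $W\mathcal{M}_kW\subseteq V\mathcal{M}_kV$ and $T(W\mathcal{M}_kW)\subseteq W\mathcal{M}_kW$ are $W=0$ and $W=V$. A self-adjoint positive map $T:\mathcal{M}_k\to\mathcal{M}_k$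 is completely reducible if there are orthogonal projections $W_1,\dots,W_l$ with $W_iW_j=0$ for $i\ne j$, $T(W_i\mathcal{M}_kW_i)\subseteq W_i\mathcal{M}_kW_i$ and $T|_{W_i\mathcal{M}_kW_i}$ irreducible for every $i$, and $T|_R\equiv0$, where $R$ is the orthogonal complement (trace inner product) of $\bigoplus_iW_i\mathcal{M}_kW_i$ in $\mathcal{M}_k$. $CR_{k,m}$ is the set of states $\gamma\in\mathcal{M}_k\otimes\mathcal{M}_m$ such that $F_\gamma\circ G_\gamma:\mathcal{M}_k\to\mathcal{M}_k$ is completely reducible. *)

theory Defs
  imports "HOL-Analysis.Analysis"
begin

text \<open>Matrices in M_k are complex^'k^'k with 'k a finite index type (k = CARD('k)).
  M_k tensor M_m is identified with complex^('k\<times>'m)^('k\<times>'m): the Kronecker product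
  A\<otimes>B has entry (i,j),(i',l) equal to A i i' * B j l.\<close>

definition cadj :: "complex^'n^'m \<Rightarrow> complex^'m^'n" where
  "cadj A = (\<chi> i j. cnj (A $ j $ i))"

definition kron :: "complex^'k^'k \<Rightarrow> complex^'m^'m \<Rightarrow> complex^('k\<times>'m)^('k\<times>'m)" where
  "kron A B = (\<chi> p q. A $ fst p $ fst q * B $ snd p $ snd q)"

definition kronv :: "complex^'k \<Rightarrow> complex^'m \<Rightarrow> complex^('k\<times>'m)" where
  "kronv a b = (\<chi> p. a $ fst p * b $ snd p)"

definition outer :: "complex^'n \<Rightarrow> complex^'n^'n" where
  "outer v = (\<chi> i j. v $ i * cnj (v $ j))"

definition hermitian :: "complex^'n^'n \<Rightarrow> bool" where
  "hermitian A \<longleftrightarrow> cadj A = A"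

text \<open>positive semidefinite Hermitian matrix (a state, not necessarily of trace one)\<close>
definition psd :: "complex^'n^'n \<Rightarrow> bool" where
  "psd A \<longleftrightarrow> hermitian A \<and> (\<forall>x. 0 \<le> Re (\<Sum>i\<in>UNIV. cnj (x $ i) * (A *v x) $ i))"

text \<open>For gamma = sum A_i \<otimes> B_i, G_gamma(X) = sum tr(A_i X) B_i; this is
  linear in gamma, and for gamma = A\<otimes>B the entry formula below gives exactly tr(AX) B,
  so these are the maps of the paper written in entries (independent of decomposition).\<close>
definition Gmap :: "complex^('k\<times>'m)^('k\<times>'m) \<Rightarrow> complex^'k^'k \<Rightarrow> complex^'m^'m" where
  "Gmap \<gamma> X = (\<chi> j l. \<Sum>i\<in>UNIV. \<Sum>i'\<in>UNIV. \<gamma> $ (i, j) $ (i', l) * X $ i' $ i)"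

definition Fmap :: "complex^('k\<times>'m)^('k\<times>'m) \<Rightarrow> complex^'m^'m \<Rightarrow> complex^'k^'k" where
  "Fmap \<gamma> Y = (\<chi> i i'. \<Sum>j\<in>UNIV. \<Sum>l\<in>UNIV. \<gamma> $ (i, j) $ (i', l) * Y $ l $ j)"

definition positive_map :: "(complex^'n^'n \<Rightarrow> complex^'n^'n) \<Rightarrow> bool" where
  "positive_map T \<longleftrightarrow> (\<forall>X. psd X \<longrightarrow> psd (T X))"

definition selfadjoint_map :: "(complex^'n^'n \<Rightarrow> complex^'n^'n) \<Rightarrow> bool" where
  "selfadjoint_map T \<longleftrightarrow> (\<forall>X Y. trace (T X ** cadj Y) = trace (X ** cadj (T Y)))"

definition orth_proj :: "complex^'n^'n \<Rightarrow> bool" where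
  "orth_proj W \<longleftrightarrow> cadj W = W \<and> W ** W = W"

definition corner :: "complex^'n^'n \<Rightarrow> complex^'n^'n \<Rightarrow> (complex^'n^'n) set" where
  "corner V W = {V ** X ** W | X. True}"

text \<open>T restricted to V M_k V (assumed to map it into itself) is irreducible\<close>
definition irreducible_on :: "complex^'n^'n \<Rightarrow> (complex^'n^'n \<Rightarrow> complex^'n^'n) \<Rightarrow> bool" where
  "irreducible_on V T \<longleftrightarrow>
     (\<forall>W. orth_proj W \<and> corner W W \<subseteq> corner V V \<and> T ` corner W W \<subseteq> corner W W
          \<longrightarrow> W = 0 \<or> W = V)"

definition completely_reducible :: "(complex^'n^'n \<Rightarrow> complex^'n^'n) \<Rightarrow> bool" where
  "completely_reducible T \<longleftrightarrow> selfadjoint_map T \<and> positive_map T \<and>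
     (\<exists>Ws :: (complex^'n^'n) list.
        (\<forall>i<length Ws. orth_proj (Ws ! i)) \<and>
        (\<forall>i<length Ws. \<forall>j<length Ws. i \<noteq> j \<longrightarrow> Ws ! i ** Ws ! j = 0) \<and>
        (\<forall>i<length Ws. T ` corner (Ws ! i) (Ws ! i) \<subseteq> corner (Ws ! i) (Ws ! i)) \<and>
        (\<forall>i<length Ws. irreducible_on (Ws ! i) T) \<and>
        (\<forall>X. (\<forall>i<length Ws. \<forall>Y\<in>corner (Ws ! i) (Ws ! i). trace (X ** cadj Y) = 0)
             \<longrightarrow> T X = 0))"

definition CR :: "(complex^('k::finite\<times>'m::finite)^('k\<times>'m)) set" where
  "CR = {\<gamma>. psd \<gamma> \<and> completely_reducible (Fmap \<gamma> \<circ> Gmap \<gamma>)}"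

end

theory Submission
  imports Defs
begin



lemma rank1_factor:
  fixes g :: "complex^'n^'m"
  assumes "rank g = 1"
  shows "\<exists>c d. \<forall>p q. g $ p $ q = d $ p * c $ q"
proof -
  obtain B where B: "B \<subseteq> rows g" "vec.independent B" "rows g \<subseteq> vec.span B" "card B = vec.dim (rows g)"
    by (rule vec.basis_exists)
  with assms have "card B = 1" by (simp add: row_rank_def_gen)
  then obtain c where Bc: "B = {c}" by (auto simp: card_Suc_eq)
  have "\<forall>p. \<exists>k. g $ p = k *s c"
  proof
    fix p
    have "row p g \<in> rows g" by (auto simp: rows_def)
    then have "row p g \<in> range (\<lambda>k. k *s c)" using B(3) Bc vec.span_singleton by blast
    moreover have "row p g = g $ p" by (simp add: row_def vec_eq_iff)
    ultimately show "\<exists>k. g $ p = k *s c" by auto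
  qed
  then obtain k where k: "\<And>p. g $ p = k p *s c" by metis
  show ?thesis
    by (rule exI[of _ c], rule exI[of _ "\<chi> p. k p"]) (simp add: k)
qed

lemma rank1_nz:
  fixes g :: "complex^'n^'m"
  assumes "rank g = 1"
  shows "g \<noteq> 0"
proof
  assume "g = 0"
  then have "rows g \<subseteq> {0}" by (auto simp: rows_def row_def vec_eq_iff)
  then have "vec.dim (rows g) = 0"
  proof -
    have "rows g \<subseteq> vec.span {}" using \<open>rows g \<subseteq> {0}\<close> by (simp add: vec.span_empty)
    then have "vec.dim (rows g) \<le> vec.dim ({}::(complex^'n) set)" by (rule vec.dim_mono)
    then show ?thesis by simp
  qed
  with assms show False by (simp add: row_rank_def_gen)
qed


lemma mv_axis: "(A *v axis j (1::'a::comm_semiring_1)) $ i = A $ i $ j"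
  by (simp add: matrix_vector_mult_def axis_def if_distrib cong: if_cong)

lemma sum_axis_cnj: "(\<Sum>i\<in>UNIV. cnj (axis p (1::complex) $ i) * f i) = f p"
proof -
  have "(\<Sum>i\<in>UNIV. cnj (axis p (1::complex) $ i) * f i) = (\<Sum>i\<in>UNIV. if i = p then f i else 0)"
    by (rule sum.cong) (auto simp: axis_def)
  then show ?thesis by simp
qed

lemma herm_entry: "hermitian g \<Longrightarrow> g $ p $ q = cnj (g $ q $ p)"
  unfolding hermitian_def cadj_def by (metis vec_lambda_beta)

lemma psd_diag: "psd g \<Longrightarrow> 0 \<le> Re (g $ p $ p)"
proof -
  assume "psd g"
  then have "0 \<le> Re (\<Sum>i\<in>UNIV. cnj (axis p 1 $ i) * (g *v axis p 1) $ i)"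
    unfolding psd_def by blast
  also have "(\<Sum>i\<in>UNIV. cnj (axis p 1 $ i) * (g *v axis p 1) $ i) = g $ p $ p"
    unfolding mv_axis sum_axis_cnj ..
  finally show ?thesis .
qed

lemma rank1_outer:
  fixes g :: "complex^'n^'n"
  assumes h: "hermitian g" and fac: "\<And>p q. g $ p $ q = d $ p * c $ q"
    and diag: "\<And>p. 0 \<le> Re (g $ p $ p)" and nz: "g \<noteq> 0"
  shows "\<exists>v. g = outer v"
proof -
  have key: "g $ p $ p0 * g $ p0 $ q = g $ p $ q * g $ p0 $ p0" for p q p0
    by (simp add: fac)
  obtain p0 where p0: "g $ p0 $ p0 \<noteq> 0"
  proof (rule ccontr)
    assume "\<not> thesis"
    then have z: "\<And>p. g $ p $ p = 0" using that by blast
    have "g $ p $ q = 0" for p q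
    proof -
      have "g $ p $ q * cnj (g $ p $ q) = g $ p $ q * g $ q $ p"
        using herm_entry[OF h, of q p] by simp
      also have "\<dots> = g $ p $ p * g $ q $ q" by (simp add: fac)
      finally have "g $ p $ q * cnj (g $ p $ q) = 0" using z by simp
      then show ?thesis by simp
    qed
    then have "g = 0" by (simp add: vec_eq_iff)
    with nz show False by simp
  qed
  define r where "r = Re (g $ p0 $ p0)"
  have gr: "g $ p0 $ p0 = complex_of_real r"
    using herm_entry[OF h, of p0 p0] unfolding r_def by (simp add: complex_eq_iff)
  have rpos: "r > 0" using diag[of p0] p0 gr unfolding r_def by (auto simp: less_le)
  define v where "v = (\<chi> p. g $ p $ p0 / complex_of_real (sqrt r))"
  have "g = outer v"
  proof (simp add: vec_eq_iff outer_def, intro allI)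
    fix p q
    have sq: "complex_of_real (sqrt r) * complex_of_real (sqrt r) = complex_of_real r"
    proof -
      have "sqrt r * sqrt r = r" using rpos by simp
      then show ?thesis by (simp only: of_real_mult[symmetric])
    qed
    have "v $ p * cnj (v $ q) = g $ p $ p0 * cnj (g $ q $ p0) / (complex_of_real (sqrt r) * complex_of_real (sqrt r))"
      unfolding v_def vec_lambda_beta complex_cnj_divide complex_cnj_complex_of_real by simp
    also have "\<dots> = g $ p $ p0 * g $ p0 $ q / g $ p0 $ p0"
      using herm_entry[OF h, of p0 q] sq gr by simp
    also have "\<dots> = g $ p $ q" using key[of p p0 q] p0 by simp
    finally show "g $ p $ q = v $ p * cnj (v $ q)" by simp
  qed
  then show ?thesis by blast
qed


definition Amat :: "complex^('k::finite\<times>'m::finite) \<Rightarrow> complex^'k^'k" where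
  "Amat v = (\<chi> i i'. \<Sum>j\<in>UNIV. v $ (i, j) * cnj (v $ (i', j)))"

lemma FG_outer:
  fixes v :: "complex^('k::finite\<times>'m::finite)"
  shows "Fmap (outer v) (Gmap (outer v) X) = Amat v ** X ** Amat v"
proof -
  have "Fmap (outer v) (Gmap (outer v) X) $ a $ b = (Amat v ** X ** Amat v) $ a $ b" for a b
  proof -
    let ?f = "\<lambda>j l k m. v $ (a, j) * cnj (v $ (b, l)) * (v $ (k, l) * cnj (v $ (m, j)) * X $ m $ k)"
    have L: "Fmap (outer v) (Gmap (outer v) X) $ a $ b = (\<Sum>j\<in>UNIV. \<Sum>l\<in>UNIV. \<Sum>k\<in>UNIV. \<Sum>m\<in>UNIV. ?f j l k m)"
      by (simp add: Fmap_def Gmap_def outer_def sum_distrib_left)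
    have R: "(Amat v ** X ** Amat v) $ a $ b = (\<Sum>k\<in>UNIV. \<Sum>m\<in>UNIV. \<Sum>j\<in>UNIV. \<Sum>l\<in>UNIV. ?f j l k m)"
      by (simp add: Amat_def matrix_matrix_mult_def sum_distrib_left sum_distrib_right mult_ac)
    have s1: "(\<Sum>m\<in>UNIV. \<Sum>j\<in>UNIV. \<Sum>l\<in>UNIV. ?f j l k m) = (\<Sum>j\<in>UNIV. \<Sum>m\<in>UNIV. \<Sum>l\<in>UNIV. ?f j l k m)" for k
      by (rule sum.swap)
    have s2: "(\<Sum>m\<in>UNIV. \<Sum>l\<in>UNIV. ?f j l k m) = (\<Sum>l\<in>UNIV. \<Sum>m\<in>UNIV. ?f j l k m)" for k j
      by (rule sum.swap)
    have s3: "(\<Sum>k\<in>UNIV. \<Sum>j\<in>UNIV. \<Sum>l\<in>UNIV. \<Sum>m\<in>UNIV. ?f j l k m) = (\<Sum>j\<in>UNIV. \<Sum>k\<in>UNIV. \<Sum>l\<in>UNIV. \<Sum>m\<in>UNIV. ?f j l k m)"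
      by (rule sum.swap)
    have s4: "(\<Sum>k\<in>UNIV. \<Sum>l\<in>UNIV. \<Sum>m\<in>UNIV. ?f j l k m) = (\<Sum>l\<in>UNIV. \<Sum>k\<in>UNIV. \<Sum>m\<in>UNIV. ?f j l k m)" for j
      by (rule sum.swap)
    have "(\<Sum>k\<in>UNIV. \<Sum>m\<in>UNIV. \<Sum>j\<in>UNIV. \<Sum>l\<in>UNIV. ?f j l k m) = (\<Sum>j\<in>UNIV. \<Sum>l\<in>UNIV. \<Sum>k\<in>UNIV. \<Sum>m\<in>UNIV. ?f j l k m)"
      unfolding s1 s2 s3 s4 ..
    then show ?thesis using L R by simp
  qed
  then show ?thesis by (simp add: vec_eq_iff)
qed


lemma cadj_mult: "cadj (A ** B) = cadj B ** cadj (A::complex^'n^'n)"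
  by (simp add: cadj_def matrix_matrix_mult_def vec_eq_iff mult.commute)

lemma cadj_cadj[simp]: "cadj (cadj A) = (A::complex^'n^'n)"
  by (simp add: cadj_def vec_eq_iff)

lemma herm_cadj: "hermitian A \<Longrightarrow> cadj A = A" by (simp add: hermitian_def)

lemma herm_form_move:
  fixes A :: "complex^'n^'n"
  assumes "hermitian A"
  shows "(\<Sum>i\<in>UNIV. cnj (x $ i) * (A *v w) $ i) = (\<Sum>j\<in>UNIV. cnj ((A *v x) $ j) * w $ j)"
proof -
  have A: "cnj (A $ j $ i) = A $ i $ j" for i j
    using assms unfolding hermitian_def cadj_def by (metis vec_lambda_beta)
  have "(\<Sum>i\<in>UNIV. cnj (x $ i) * (A *v w) $ i) = (\<Sum>i\<in>UNIV. \<Sum>j\<in>UNIV. cnj (x $ i) * A $ i $ j * w $ j)"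
    by (simp add: matrix_vector_mult_def sum_distrib_left mult.assoc)
  also have "\<dots> = (\<Sum>j\<in>UNIV. \<Sum>i\<in>UNIV. cnj (x $ i) * A $ i $ j * w $ j)" by (rule sum.swap)
  also have "\<dots> = (\<Sum>j\<in>UNIV. cnj ((A *v x) $ j) * w $ j)"
    by (simp add: matrix_vector_mult_def sum_distrib_right sum_distrib_left A mult_ac)
  finally show ?thesis .
qed

lemma selfadj_sandwich:
  fixes A :: "complex^'n^'n"
  assumes "hermitian A"
  shows "selfadjoint_map (\<lambda>X. A ** X ** A)"
  unfolding selfadjoint_map_def
proof (intro allI)
  fix X Y :: "complex^'n^'n"
  have c: "cadj (A ** Y ** A) = A ** cadj Y ** A"
    using assms unfolding hermitian_def by (simp only: cadj_mult matrix_mul_assoc)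
  have "trace (A ** X ** A ** cadj Y) = trace (A ** (X ** A ** cadj Y))"
    by (simp add: matrix_mul_assoc)
  also have "\<dots> = trace ((X ** A ** cadj Y) ** A)" by (rule trace_mul_sym)
  also have "\<dots> = trace (X ** cadj (A ** Y ** A))" by (simp only: c matrix_mul_assoc)
  finally show "trace (A ** X ** A ** cadj Y) = trace (X ** cadj (A ** Y ** A))" .
qed

lemma pos_sandwich:
  fixes A :: "complex^'n^'n"
  assumes "hermitian A"
  shows "positive_map (\<lambda>X. A ** X ** A)"
  unfolding positive_map_def
proof (intro allI impI)
  fix X :: "complex^'n^'n" assume X: "psd X"
  have h: "hermitian (A ** X ** A)"
    using assms X unfolding psd_def hermitian_def by (simp only: cadj_mult matrix_mul_assoc)
  have "0 \<le> Re (\<Sum>i\<in>UNIV. cnj (x $ i) * (A ** X ** A *v x) $ i)" for x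
  proof -
    have "(\<Sum>i\<in>UNIV. cnj (x $ i) * (A ** X ** A *v x) $ i) = (\<Sum>i\<in>UNIV. cnj (x $ i) * (A *v (X *v (A *v x))) $ i)"
      by (simp add: matrix_vector_mul_assoc matrix_mul_assoc)
    also have "\<dots> = (\<Sum>j\<in>UNIV. cnj ((A *v x) $ j) * (X *v (A *v x)) $ j)"
      by (rule herm_form_move[OF assms])
    finally show ?thesis using X unfolding psd_def by simp
  qed
  with h show "psd (A ** X ** A)" by (simp add: psd_def)
qed


definition qf :: "complex^'n^'n \<Rightarrow> complex^'n \<Rightarrow> complex" where
  "qf Z e = (\<Sum>k\<in>UNIV. cnj (e $ k) * (Z *v e) $ k)"

lemma outer_sandwich:
  "outer e ** Z ** outer e = (\<chi> i j. e $ i * qf Z e * cnj (e $ j))"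
proof -
  have "(outer e ** Z ** outer e) $ i $ j = e $ i * qf Z e * cnj (e $ j)" for i j
  proof -
    have "(outer e ** Z ** outer e) $ i $ j = (\<Sum>m\<in>UNIV. \<Sum>k\<in>UNIV. e $ i * cnj (e $ j) * (cnj (e $ k) * Z $ k $ m * e $ m))"
      by (simp add: outer_def matrix_matrix_mult_def sum_distrib_left sum_distrib_right mult_ac)
    also have "\<dots> = (\<Sum>k\<in>UNIV. \<Sum>m\<in>UNIV. e $ i * cnj (e $ j) * (cnj (e $ k) * Z $ k $ m * e $ m))"
      by (rule sum.swap)
    also have "\<dots> = e $ i * qf Z e * cnj (e $ j)"
      by (simp add: qf_def matrix_vector_mult_def sum_distrib_left sum_distrib_right mult_ac)
    finally show ?thesis .
  qed
  then show ?thesis by (simp add: vec_eq_iff)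
qed

lemma trace_outer: "trace (Z ** outer e) = qf Z e"
  by (simp add: trace_def qf_def outer_def matrix_matrix_mult_def matrix_vector_mult_def
      sum_distrib_left sum_distrib_right mult_ac)

lemma cadj_outer[simp]: "cadj (outer e) = outer e"
  by (simp add: cadj_def outer_def vec_eq_iff mult.commute)

lemma outer_idem:
  assumes "(\<Sum>i\<in>UNIV. cnj (e $ i) * e $ i) = 1"
  shows "outer e ** outer e = outer e"
proof -
  have "(outer e ** outer e) $ i $ j = outer e $ i $ j" for i j
  proof -
    have "(outer e ** outer e) $ i $ j = e $ i * cnj (e $ j) * (\<Sum>k\<in>UNIV. cnj (e $ k) * e $ k)"
      by (simp add: outer_def matrix_matrix_mult_def sum_distrib_left mult_ac)
    then show ?thesis using assms by (simp add: outer_def)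
  qed
  then show ?thesis by (simp add: vec_eq_iff)
qed

lemma corner_self: "W ** W ** W \<in> corner W W"
  unfolding corner_def by blast

lemma rev_cr:
  fixes e :: "complex^'n" and \<mu> :: real
  assumes ne: "(\<Sum>i\<in>UNIV. cnj (e $ i) * e $ i) = 1"
    and A: "A = (\<chi> i j. complex_of_real \<mu> * (e $ i * cnj (e $ j)))"
  shows "completely_reducible (\<lambda>X. A ** X ** A)"
proof -
  define P where "P = outer e"
  have PP: "P ** P = P" unfolding P_def by (rule outer_idem[OF ne])
  have oP: "orth_proj P" using PP by (simp add: orth_proj_def P_def)
  have hA: "hermitian A" by (simp add: A hermitian_def cadj_def vec_eq_iff mult.commute)
  have PA: "P ** A = A"
  proof -
    have "(P ** A) $ i $ j = A $ i $ j" for i j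
    proof -
      have "(P ** A) $ i $ j = complex_of_real \<mu> * (e $ i * cnj (e $ j)) * (\<Sum>k\<in>UNIV. cnj (e $ k) * e $ k)"
        by (simp add: A P_def outer_def matrix_matrix_mult_def sum_distrib_left mult_ac)
      then show ?thesis using ne by (simp add: A)
    qed
    then show ?thesis by (simp add: vec_eq_iff)
  qed
  have AP: "A ** P = A"
  proof -
    have "cadj (P ** A) = cadj A" using PA by simp
    then show ?thesis using hA by (simp add: cadj_mult hermitian_def P_def)
  qed
  have e0: "\<exists>i. e $ i \<noteq> 0"
  proof (rule ccontr)
    assume "\<not> ?thesis"
    then have "(\<Sum>i\<in>UNIV. cnj (e $ i) * e $ i) = 0" by simp
    with ne show False by simp
  qed
  then obtain i0 where i0: "e $ i0 \<noteq> 0" by blast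
  have inv: "A ** X ** A \<in> corner P P" for X
  proof -
    have "P ** (A ** X ** A) ** P = (P ** A) ** X ** (A ** P)" by (simp add: matrix_mul_assoc)
    then have "A ** X ** A = P ** (A ** X ** A) ** P" by (simp add: PA AP)
    then show ?thesis unfolding corner_def by blast
  qed
  have irr: "irreducible_on P (\<lambda>X. A ** X ** A)"
    unfolding irreducible_on_def
  proof (intro allI impI)
    fix W assume H: "orth_proj W \<and> corner W W \<subseteq> corner P P \<and> (\<lambda>X. A ** X ** A) ` corner W W \<subseteq> corner W W"
    then have WW: "W ** W = W" and cW: "corner W W \<subseteq> corner P P" by (auto simp: orth_proj_def)
    have "W ** W ** W = W" using WW by simp
    then have "W \<in> corner P P" using corner_self[of W] cW by auto
    then obtain Z where "W = P ** Z ** P" unfolding corner_def by blast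
    then have Wc: "W = (\<chi> i j. e $ i * qf Z e * cnj (e $ j))"
      by (simp add: P_def outer_sandwich)
    define c where "c = qf Z e"
    have "(W ** W) $ i0 $ i0 = W $ i0 $ i0" using WW by simp
    moreover have "(W ** W) $ i0 $ i0 = e $ i0 * c * cnj (e $ i0) * c * (\<Sum>k\<in>UNIV. cnj (e $ k) * e $ k)"
      by (simp add: Wc c_def matrix_matrix_mult_def sum_distrib_left mult_ac)
    ultimately have "e $ i0 * cnj (e $ i0) * (c * c) = e $ i0 * cnj (e $ i0) * c"
      using ne by (simp add: Wc c_def mult_ac)
    moreover have "e $ i0 * cnj (e $ i0) \<noteq> 0" using i0 by simp
    ultimately have "c * c = c" by simp
    then have "c * (c - 1) = 0" by (simp add: algebra_simps)
    then have "c = 0 \<or> c = 1" by simp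
    then show "W = 0 \<or> W = P"
    proof
      assume "c = 0" then show ?thesis by (simp add: Wc c_def vec_eq_iff)
    next
      assume "c = 1" then show ?thesis by (simp add: Wc c_def vec_eq_iff P_def outer_def)
    qed
  qed
  have R: "A ** X ** A = 0" if HX: "\<forall>Y\<in>corner P P. trace (X ** cadj Y) = 0" for X
  proof -
    have "P \<in> corner P P" using corner_self[of P] PP by simp
    then have "trace (X ** cadj P) = 0" using HX by blast
    then have "trace (X ** P) = 0" by (simp add: P_def)
    then have q: "qf X e = 0" by (simp add: P_def trace_outer)
    have "P ** X ** P = 0" by (simp add: P_def outer_sandwich q vec_eq_iff)
    have "A ** (P ** X ** P) ** A = (A ** P) ** X ** (P ** A)" by (simp add: matrix_mul_assoc)
    then have "A ** X ** A = A ** (P ** X ** P) ** A" by (simp add: PA AP)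
    also have "\<dots> = 0" using \<open>P ** X ** P = 0\<close> by simp
    finally show ?thesis .
  qed
  show ?thesis
    unfolding completely_reducible_def
  proof (intro conjI selfadj_sandwich[OF hA] pos_sandwich[OF hA] exI[of _ "[P]"])
    show "\<forall>i<length [P]. orth_proj ([P] ! i)" using oP by simp
    show "\<forall>i<length [P]. \<forall>j<length [P]. i \<noteq> j \<longrightarrow> [P] ! i ** [P] ! j = 0" by simp
    show "\<forall>i<length [P]. (\<lambda>X. A ** X ** A) ` corner ([P] ! i) ([P] ! i) \<subseteq> corner ([P] ! i) ([P] ! i)"
      using inv by auto
    show "\<forall>i<length [P]. irreducible_on ([P] ! i) (\<lambda>X. A ** X ** A)" using irr by simp
    show "\<forall>X. (\<forall>i<length [P]. \<forall>Y\<in>corner ([P] ! i) ([P] ! i). trace (X ** cadj Y) = 0) \<longrightarrow> A ** X ** A = 0"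
      using R by simp
  qed
qed





lemma cnj_mult_self: "cnj z * z = complex_of_real ((cmod z)\<^sup>2)"
  by (subst complex_norm_square) (rule mult.commute)

lemma sum_cnj_self: "(\<Sum>i\<in>UNIV. cnj (x $ i) * x $ i) = complex_of_real (\<Sum>i\<in>UNIV. (cmod (x $ i))\<^sup>2)"
  by (simp only: cnj_mult_self of_real_sum)

lemma Amat_kron: "Amat (kronv a b) = (\<chi> i j. (\<Sum>k\<in>UNIV. b $ k * cnj (b $ k)) * (a $ i * cnj (a $ j)))"
  by (simp add: Amat_def kronv_def vec_eq_iff sum_distrib_left sum_distrib_right mult_ac)

lemma rev_main:
  fixes a :: "complex^'k::finite" and b :: "complex^'m::finite"
  assumes "psd \<gamma>" and g: "\<gamma> = outer (kronv a b)"
  shows "\<gamma> \<in> CR"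
proof -
  define sa where "sa = (\<Sum>i\<in>UNIV. (cmod (a $ i))\<^sup>2)"
  define sb where "sb = (\<Sum>i\<in>UNIV. (cmod (b $ i))\<^sup>2)"
  have sb: "(\<Sum>k\<in>UNIV. b $ k * cnj (b $ k)) = complex_of_real sb"
    unfolding sb_def of_real_sum by (intro sum.cong refl complex_norm_square[symmetric])
  have A: "Amat (kronv a b) = (\<chi> i j. complex_of_real sb * (a $ i * cnj (a $ j)))"
    by (simp add: Amat_kron sb)
  have "\<exists>e \<mu>. (\<Sum>i\<in>UNIV. cnj (e $ i) * e $ i) = 1 \<and>
      Amat (kronv a b) = (\<chi> i j. complex_of_real \<mu> * (e $ i * cnj (e $ j)))"
  proof (cases "sa = 0")
    case True
    then have "a $ i = 0" for i
      using sum_nonneg_eq_0_iff[of UNIV "\<lambda>i. (cmod (a $ i))\<^sup>2"] unfolding sa_def by simp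
    then have "Amat (kronv a b) = (\<chi> i j. complex_of_real 0 * (axis i0 1 $ i * cnj (axis i0 1 $ j)))" for i0
      by (simp add: A)
    moreover have "(\<Sum>i\<in>UNIV. cnj (axis i0 1 $ i) * axis i0 (1::complex) $ i) = 1" for i0
      unfolding sum_axis_cnj by (simp add: axis_def)
    ultimately show ?thesis by blast
  next
    case False
    have sapos: "sa > 0" using False unfolding sa_def by (simp add: less_le sum_nonneg)
    define e where "e = (\<chi> i. a $ i / complex_of_real (sqrt sa))"
    have sq: "complex_of_real (sqrt sa) * complex_of_real (sqrt sa) = complex_of_real sa"
    proof -
      have "sqrt sa * sqrt sa = sa" using sapos by simp
      then show ?thesis by (simp only: of_real_mult[symmetric])
    qed
    have ee: "e $ i * cnj (e $ j) = a $ i * cnj (a $ j) / complex_of_real sa" for i j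
      unfolding e_def vec_lambda_beta complex_cnj_divide complex_cnj_complex_of_real sq[symmetric]
      by simp
    have "(\<Sum>i\<in>UNIV. cnj (e $ i) * e $ i) = (\<Sum>i\<in>UNIV. cnj (a $ i) * a $ i) / complex_of_real sa"
      unfolding sum_divide_distrib by (intro sum.cong refl) (simp add: ee[of i i for i] mult.commute)
    also have "\<dots> = 1" unfolding sum_cnj_self sa_def[symmetric] using sapos by simp
    finally have ne: "(\<Sum>i\<in>UNIV. cnj (e $ i) * e $ i) = 1" .
    have "Amat (kronv a b) = (\<chi> i j. complex_of_real (sb * sa) * (e $ i * cnj (e $ j)))"
      using sapos by (simp add: A vec_eq_iff ee)
    with ne show ?thesis by blast
  qed
  then obtain e \<mu> where ne: "(\<Sum>i\<in>UNIV. cnj (e $ i) * e $ i) = 1"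
    and Ae: "Amat (kronv a b) = (\<chi> i j. complex_of_real \<mu> * (e $ i * cnj (e $ j)))" by blast
  have "Fmap \<gamma> \<circ> Gmap \<gamma> = (\<lambda>X. Amat (kronv a b) ** X ** Amat (kronv a b))"
    by (simp add: g fun_eq_iff FG_outer)
  then show ?thesis using rev_cr[OF ne Ae] assms(1) by (simp add: CR_def)
qed


lemma fwd_c:
  fixes v :: "complex^('k::finite\<times>'m::finite)" and e :: "complex^'k" and l :: real
  assumes ne: "(\<Sum>i\<in>UNIV. cnj (e $ i) * e $ i) = 1"
    and A: "\<And>i i'. (\<Sum>j\<in>UNIV. v $ (i, j) * cnj (v $ (i', j))) = complex_of_real l * (e $ i * cnj (e $ i'))"
  shows "\<exists>a b. v = kronv a b"
proof -
  define b :: "complex^'m" where "b = (\<chi> j. \<Sum>k\<in>UNIV. cnj (e $ k) * v $ (k, j))"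
  have Bk: "(\<Sum>j\<in>UNIV. b $ j * cnj (v $ (k, j))) = complex_of_real l * cnj (e $ k)" for k
  proof -
    have "(\<Sum>j\<in>UNIV. b $ j * cnj (v $ (k, j))) = (\<Sum>j\<in>UNIV. \<Sum>m\<in>UNIV. cnj (e $ m) * (v $ (m, j) * cnj (v $ (k, j))))"
      by (simp add: b_def sum_distrib_right sum_distrib_left mult_ac)
    also have "\<dots> = (\<Sum>m\<in>UNIV. \<Sum>j\<in>UNIV. cnj (e $ m) * (v $ (m, j) * cnj (v $ (k, j))))"
      by (rule sum.swap)
    also have "\<dots> = (\<Sum>m\<in>UNIV. cnj (e $ m) * (complex_of_real l * (e $ m * cnj (e $ k))))"
      by (simp add: sum_distrib_left[symmetric] A)
    also have "\<dots> = complex_of_real l * cnj (e $ k) * (\<Sum>m\<in>UNIV. cnj (e $ m) * e $ m)"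
      by (simp add: sum_distrib_left mult_ac)
    finally show ?thesis using ne by simp
  qed
  have B2: "(\<Sum>j\<in>UNIV. v $ (k, j) * cnj (b $ j)) = complex_of_real l * e $ k" for k
  proof -
    have "cnj (\<Sum>j\<in>UNIV. b $ j * cnj (v $ (k, j))) = cnj (complex_of_real l * cnj (e $ k))"
      using Bk by simp
    then show ?thesis by (simp add: cnj_sum mult.commute)
  qed
  have cb: "cnj (b $ j) = (\<Sum>k\<in>UNIV. e $ k * cnj (v $ (k, j)))" for j
    by (simp add: b_def cnj_sum)
  have BB: "(\<Sum>j\<in>UNIV. b $ j * cnj (b $ j)) = complex_of_real l"
  proof -
    have "(\<Sum>j\<in>UNIV. b $ j * cnj (b $ j)) = (\<Sum>j\<in>UNIV. \<Sum>k\<in>UNIV. e $ k * (b $ j * cnj (v $ (k, j))))"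
      by (simp add: cb sum_distrib_left mult_ac)
    also have "\<dots> = (\<Sum>k\<in>UNIV. \<Sum>j\<in>UNIV. e $ k * (b $ j * cnj (v $ (k, j))))"
      by (rule sum.swap)
    also have "\<dots> = (\<Sum>k\<in>UNIV. e $ k * (complex_of_real l * cnj (e $ k)))"
      by (simp add: sum_distrib_left[symmetric] Bk)
    also have "\<dots> = complex_of_real l * (\<Sum>m\<in>UNIV. cnj (e $ m) * e $ m)"
      by (simp add: sum_distrib_left mult_ac)
    finally show ?thesis using ne by simp
  qed
  have "v $ (i, j) = e $ i * b $ j" for i j
  proof -
    define N where "N = (\<lambda>j. v $ (i, j) - e $ i * b $ j)"
    have "(\<Sum>j\<in>UNIV. N j * cnj (N j)) =
       (\<Sum>j\<in>UNIV. v $ (i, j) * cnj (v $ (i, j))) - cnj (e $ i) * (\<Sum>j\<in>UNIV. v $ (i, j) * cnj (b $ j))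
       - e $ i * (\<Sum>j\<in>UNIV. b $ j * cnj (v $ (i, j))) + e $ i * cnj (e $ i) * (\<Sum>j\<in>UNIV. b $ j * cnj (b $ j))"
      by (simp add: N_def algebra_simps sum_subtractf sum.distrib sum_distrib_left)
    also have "\<dots> = 0" unfolding A B2 Bk BB by (simp add: algebra_simps)
    finally have "(\<Sum>j\<in>UNIV. complex_of_real ((cmod (N j))\<^sup>2)) = 0"
      by (simp only: complex_norm_square)
    then have "(\<Sum>j\<in>UNIV. (cmod (N j))\<^sup>2) = 0"
      by (simp only: of_real_sum[symmetric] of_real_eq_0_iff)
    then have "(cmod (N j))\<^sup>2 = 0"
      using sum_nonneg_eq_0_iff[of UNIV "\<lambda>j. (cmod (N j))\<^sup>2"] by simp
    then show ?thesis by (simp add: N_def)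
  qed
  then have "v = kronv e b" by (simp add: kronv_def vec_eq_iff)
  then show ?thesis by blast
qed



lemma quad_zero:
  fixes a r :: real
  assumes H: "\<And>t. 0 \<le> 2 * t * a + t\<^sup>2 * r"
  shows "a = 0"
proof (rule ccontr)
  assume a: "a \<noteq> 0"
  define s where "s = 1 / (\<bar>r\<bar> + 1)"
  have spos: "s > 0" by (simp add: s_def add_pos_nonneg)
  have "s * \<bar>r\<bar> < 1" unfolding s_def by (simp add: field_simps)
  moreover have "s * r \<le> s * \<bar>r\<bar>" using spos by (simp add: mult_left_mono)
  ultimately have sr: "s * r - 2 < 0" by simp
  have "a\<^sup>2 * s > 0" using a spos by simp
  then have "(a\<^sup>2 * s) * (s * r - 2) < 0" using sr by (rule mult_pos_neg)
  moreover have "2 * (- a * s) * a + (- a * s)\<^sup>2 * r = (a\<^sup>2 * s) * (s * r - 2)"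
    by (simp add: power2_eq_square algebra_simps)
  ultimately show False using H[of "- a * s"] by simp
qed

definition bf :: "complex^'n^'n \<Rightarrow> complex^'n \<Rightarrow> complex^'n \<Rightarrow> complex" where
  "bf B x y = (\<Sum>i\<in>UNIV. cnj (x $ i) * (B *v y) $ i)"

lemma bf_add_l: "bf B (x + y) z = bf B x z + bf B y z"
  by (simp add: bf_def ring_distribs sum.distrib)

lemma bf_add_r: "bf B x (y + z) = bf B x y + bf B x z"
  by (simp add: bf_def matrix_vector_right_distrib ring_distribs sum.distrib)

lemma mv_smult: "B *v (c *s y) = c *s (B *v (y::complex^'n))"
  by (simp add: vec_eq_iff matrix_vector_mult_def sum_distrib_left mult_ac)

lemma bf_smult_l: "bf B (c *s x) y = cnj c * bf B x y"
  by (simp add: bf_def sum_distrib_left mult_ac)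

lemma bf_smult_r: "bf B x (c *s y) = c * bf B x y"
  by (simp add: bf_def mv_smult sum_distrib_left mult_ac)

lemma bf_axis_l: "bf B (axis j 1) y = (B *v y) $ j"
  by (simp add: bf_def sum_axis_cnj)

lemma bf_herm_swap:
  assumes "hermitian B"
  shows "bf B y x = cnj (bf B x y)"
proof -
  have "bf B x y = (\<Sum>j\<in>UNIV. cnj ((B *v x) $ j) * y $ j)"
    unfolding bf_def by (rule herm_form_move[OF assms])
  then show ?thesis by (simp add: bf_def cnj_sum mult.commute)
qed

lemma kernel_lemma:
  fixes B :: "complex^'n^'n"
  assumes h: "hermitian B" and pos: "\<And>x. 0 \<le> Re (bf B x x)" and z0: "Re (bf B e e) = 0"
  shows "B *v e = 0"
proof -
  have "(B *v e) $ j = 0" for j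
  proof -
    define d :: "complex^'n" where "d = axis j 1"
    define z where "z = (B *v e) $ j"
    define r where "r = Re (bf B d d)"
    have dz: "bf B d e = z" by (simp add: d_def z_def bf_axis_l)
    have ez: "bf B e d = cnj z" using bf_herm_swap[OF h, of d e] dz by simp
    have exp: "bf B (e + c *s d) (e + c *s d) = bf B e e + c * cnj z + cnj c * z + cnj c * c * bf B d d" for c
      by (simp add: bf_add_l bf_add_r bf_smult_l bf_smult_r dz ez algebra_simps)
    have "0 \<le> 2 * t * Re z + t\<^sup>2 * r" for t
    proof -
      have "Re (bf B (e + complex_of_real t *s d) (e + complex_of_real t *s d)) = 2 * t * Re z + t\<^sup>2 * r"
        unfolding exp using z0 by (simp add: r_def power2_eq_square)
      then show ?thesis using pos by metis
    qed
    then have re: "Re z = 0" by (rule quad_zero)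
    have "0 \<le> 2 * t * Im z + t\<^sup>2 * r" for t
    proof -
      have "Re (bf B (e + (\<i> * complex_of_real t) *s d) (e + (\<i> * complex_of_real t) *s d)) = 2 * t * Im z + t\<^sup>2 * r"
        unfolding exp using z0 by (simp add: r_def power2_eq_square)
      then show ?thesis using pos by metis
    qed
    then have im: "Im z = 0" by (rule quad_zero)
    from re im show ?thesis by (simp add: z_def complex_eq_iff)
  qed
  then show ?thesis by (simp add: vec_eq_iff)
qed


lemma mat_mv: "mat c *v x = c *s (x::'a::comm_ring_1^'n)"
proof -
  have "(\<Sum>j\<in>UNIV. (if i = j then c else 0) * x $ j) = c * x $ i" for i
  proof -
    have "(\<Sum>j\<in>UNIV. (if i = j then c else 0) * x $ j) = (\<Sum>j\<in>UNIV. if i = j then c * x $ j else 0)"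
      by (rule sum.cong) auto
    then show ?thesis by simp
  qed
  then show ?thesis by (simp add: vec_eq_iff matrix_vector_mult_def mat_def)
qed

lemma nsq: "(norm x)\<^sup>2 = (\<Sum>i\<in>UNIV. (cmod ((x::complex^'n) $ i))\<^sup>2)"
  unfolding norm_vec_def L2_set_def by (simp add: sum_nonneg)

lemma sum_cnj_norm: "(\<Sum>i\<in>UNIV. cnj (x $ i) * x $ i) = complex_of_real ((norm (x::complex^'n))\<^sup>2)"
  unfolding nsq sum_cnj_self ..

lemma bf_scaleR: "bf B (c *\<^sub>R x) (c *\<^sub>R x) = complex_of_real (c\<^sup>2) * bf B x (x::complex^'n)"
proof -
  have "c *\<^sub>R x = complex_of_real c *s x"
    unfolding vec_eq_iff vector_scaleR_component vector_smult_component by (simp add: scaleR_conv_of_real)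
  then show ?thesis by (simp add: bf_smult_l bf_smult_r power2_eq_square)
qed

lemma eigen_exists:
  fixes A :: "complex^'n^'n"
  assumes h: "hermitian A" and d: "Re (A $ i0 $ i0) > 0"
  shows "\<exists>e l. (\<Sum>i\<in>UNIV. cnj (e $ i) * e $ i) = 1 \<and> l > 0 \<and> A *v e = complex_of_real l *s e"
proof -
  define q where "q x = Re (bf A x x)" for x
  have cont: "continuous_on (sphere 0 1) q"
    unfolding q_def bf_def matrix_vector_mult_def
    by (intro continuous_intros)
  have ax: "axis i0 (1::complex) \<in> sphere 0 1"
  proof -
    have "(norm (axis i0 (1::complex)))\<^sup>2 = 1" unfolding nsq
    proof -
      have "(\<Sum>i\<in>UNIV. (cmod (axis i0 (1::complex) $ i))\<^sup>2) = (\<Sum>i\<in>UNIV. if i = i0 then 1 else 0)"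
        by (intro sum.cong refl) (simp add: axis_def)
      then show "(\<Sum>i\<in>UNIV. (cmod (axis i0 (1::complex) $ i))\<^sup>2) = 1" by simp
    qed
    then show ?thesis by (simp add: power2_eq_1_iff)
  qed
  obtain e where e: "e \<in> sphere 0 1" and emax: "\<And>y. y \<in> sphere 0 1 \<Longrightarrow> q y \<le> q e"
    using continuous_attains_sup[OF compact_sphere _ cont] ax by blast
  define l where "l = q e"
  have ne: "(\<Sum>i\<in>UNIV. cnj (e $ i) * e $ i) = 1" using e by (simp add: sum_cnj_norm)
  have bound: "q x \<le> l * (norm x)\<^sup>2" for x
  proof (cases "x = 0")
    case True then show ?thesis by (simp add: q_def bf_def)
  next
    case False
    define y where "y = (1 / norm x) *\<^sub>R x"
    have "y \<in> sphere 0 1" using False by (simp add: y_def)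
    then have "q y \<le> l" using emax l_def by simp
    moreover have "q y = (1 / norm x)\<^sup>2 * q x"
      unfolding y_def q_def bf_scaleR by simp
    ultimately have "(1 / norm x)\<^sup>2 * q x \<le> l" by simp
    then show ?thesis using False by (simp add: field_simps)
  qed
  have lpos: "l > 0"
  proof -
    have "q (axis i0 1) = Re (A $ i0 $ i0)" by (simp add: q_def bf_axis_l mv_axis)
    then show ?thesis using emax[OF ax] d l_def by simp
  qed
  define B where "B = mat (complex_of_real l) - A"
  have Bv: "B *v x = complex_of_real l *s x - A *v x" for x
    by (simp add: B_def matrix_vector_mult_diff_rdistrib mat_mv)
  have hB: "hermitian B"
    using h unfolding B_def hermitian_def cadj_def by (simp add: vec_eq_iff mat_def)
  have bfB: "Re (bf B x x) = l * (norm x)\<^sup>2 - q x" for x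
  proof -
    have "bf B x x = complex_of_real l * (\<Sum>i\<in>UNIV. cnj (x $ i) * x $ i) - bf A x x"
      by (simp add: bf_def Bv ring_distribs sum_subtractf sum_distrib_left mult_ac)
    then show ?thesis by (simp add: sum_cnj_norm q_def)
  qed
  have "B *v e = 0"
  proof (rule kernel_lemma[OF hB])
    show "0 \<le> Re (bf B x x)" for x using bound[of x] bfB[of x] by simp
    show "Re (bf B e e) = 0" using bfB[of e] e l_def by simp
  qed
  then have "A *v e = complex_of_real l *s e" by (simp add: Bv)
  with ne lpos show ?thesis by blast
qed




lemma mzero_l: "(0::complex^'n^'n) ** A = 0"
  by (simp add: matrix_matrix_mult_def vec_eq_iff)
lemma mzero_r: "A ** (0::complex^'n^'n) = 0"
  by (simp add: matrix_matrix_mult_def vec_eq_iff)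
lemma msub_r: "(A - B) ** (C::complex^'n^'n) = A ** C - B ** C"
  by (simp add: matrix_matrix_mult_def vec_eq_iff sum_subtractf ring_distribs)

lemma herm_sq_zero:
  fixes H :: "complex^'n^'n"
  assumes h: "hermitian H" and z: "H ** H = 0"
  shows "H = 0"
proof -
  have "H $ i $ j = 0" for i j
  proof -
    have "(H ** H) $ i $ i = (\<Sum>k\<in>UNIV. cnj (H $ i $ k) * H $ i $ k)"
      by (simp add: matrix_matrix_mult_def herm_entry[OF h, of _ i] mult.commute)
    also have "\<dots> = complex_of_real (\<Sum>k\<in>UNIV. (cmod (H $ i $ k))\<^sup>2)"
      by (rule sum_cnj_self)
    finally have "complex_of_real (\<Sum>k\<in>UNIV. (cmod (H $ i $ k))\<^sup>2) = 0"
      using z by simp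
    then have "(\<Sum>k\<in>UNIV. (cmod (H $ i $ k))\<^sup>2) = 0" by (simp only: of_real_eq_0_iff)
    then have "(cmod (H $ i $ j))\<^sup>2 = 0"
      using sum_nonneg_eq_0_iff[of UNIV "\<lambda>k. (cmod (H $ i $ k))\<^sup>2"] by simp
    then show ?thesis by simp
  qed
  then show ?thesis by (simp add: vec_eq_iff)
qed

lemma MYN:
  fixes M N :: "complex^'n^'n"
  assumes "\<And>Y. M ** Y ** N = 0"
  shows "M = 0 \<or> N = 0"
proof (rule ccontr)
  assume "\<not> ?thesis"
  then obtain a b c d where ab: "M $ a $ b \<noteq> 0" and cd: "N $ c $ d \<noteq> 0"
    by (auto simp: vec_eq_iff)
  define Y :: "complex^'n^'n" where "Y = (\<chi> i j. if i = b \<and> j = c then 1 else 0)"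
  have MY: "(M ** Y) $ a $ k = (if k = c then M $ a $ b else 0)" for k
  proof -
    have "(M ** Y) $ a $ k = (\<Sum>m\<in>UNIV. M $ a $ m * (if m = b \<and> k = c then 1 else 0))"
      by (simp add: matrix_matrix_mult_def Y_def)
    also have "\<dots> = (\<Sum>m\<in>UNIV. if m = b then (if k = c then M $ a $ b else 0) else 0)"
      by (intro sum.cong refl) auto
    finally have "(M ** Y) $ a $ k = (\<Sum>m\<in>UNIV. if m = b then (if k = c then M $ a $ b else 0) else 0)" .
    then show ?thesis by simp
  qed
  have "(M ** Y ** N) $ a $ d = (\<Sum>k\<in>UNIV. if k = c then M $ a $ b * N $ c $ d else 0)"
    unfolding matrix_matrix_mult_def[of "M ** Y" N] vec_lambda_beta by (intro sum.cong refl) (simp add: MY)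
  also have "\<dots> = M $ a $ b * N $ c $ d" by simp
  finally have "(M ** Y ** N) $ a $ d \<noteq> 0" using ab cd by simp
  with assms show False by simp
qed

lemma M_outer: "M ** outer e = (\<chi> a b. (M *v e) $ a * cnj (e $ b))"
  by (simp add: outer_def matrix_matrix_mult_def matrix_vector_mult_def vec_eq_iff sum_distrib_right sum_distrib_left mult_ac)

lemma fwd_b:
  fixes A :: "complex^'n^'n" and e :: "complex^'n" and l :: real
  assumes cr: "completely_reducible (\<lambda>X. A ** X ** A)" and h: "hermitian A" and nz: "A \<noteq> 0"
    and ne: "(\<Sum>i\<in>UNIV. cnj (e $ i) * e $ i) = 1" and lpos: "l > 0"
    and eig: "A *v e = complex_of_real l *s e"
  shows "A = (\<chi> i j. complex_of_real l * (e $ i * cnj (e $ j)))"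
proof -
  obtain Ws :: "(complex^'n^'n) list" where
    op: "\<forall>i<length Ws. orth_proj (Ws ! i)" and
    orth: "\<forall>i<length Ws. \<forall>j<length Ws. i \<noteq> j \<longrightarrow> Ws ! i ** Ws ! j = 0" and
    irr: "\<forall>i<length Ws. irreducible_on (Ws ! i) (\<lambda>X. A ** X ** A)" and
    R: "\<forall>X. (\<forall>i<length Ws. \<forall>Y\<in>corner (Ws ! i) (Ws ! i). trace (X ** cadj Y) = 0) \<longrightarrow> A ** X ** A = 0"
    using cr unfolding completely_reducible_def by blast
  have K: "A ** X ** A = 0" if HX: "\<forall>l<length Ws. Ws ! l ** X ** Ws ! l = 0" for X
  proof -
    have "trace (X ** cadj Y) = 0" if l: "l < length Ws" and Y: "Y \<in> corner (Ws ! l) (Ws ! l)" for l Y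
    proof -
      define W where "W = Ws ! l"
      obtain Z where YZ: "Y = W ** Z ** W" using Y unfolding corner_def W_def by blast
      have cW: "cadj W = W" using op l unfolding W_def orth_proj_def by blast
      have "cadj Y = W ** cadj Z ** W" unfolding YZ by (simp only: cadj_mult cW matrix_mul_assoc)
      then have "trace (X ** cadj Y) = trace (W ** ((X ** W) ** cadj Z))"
        by (simp only: matrix_mul_assoc trace_mul_sym[of _ W])
      also have "\<dots> = trace ((W ** X ** W) ** cadj Z)" by (simp only: matrix_mul_assoc)
      also have "\<dots> = 0" using HX l by (simp add: W_def mzero_l trace_def)
      finally show ?thesis .
    qed
    then show ?thesis using R by blast
  qed
  define \<Lambda> :: "complex^'n^'n" where "\<Lambda> = (\<chi> i j. complex_of_real l * (e $ i * cnj (e $ j)))"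
  define E where "E = outer e"
  have cA: "cadj A = A" using h by (simp add: hermitian_def)
  have cE: "cadj E = E" by (simp add: E_def)
  have EE: "E ** E = E" unfolding E_def by (rule outer_idem[OF ne])
  have AE: "A ** E = \<Lambda>" by (simp add: E_def M_outer eig \<Lambda>_def vec_eq_iff mult.assoc)
  have cL: "cadj \<Lambda> = \<Lambda>" by (simp add: \<Lambda>_def cadj_def vec_eq_iff mult.commute)
  have EA: "E ** A = \<Lambda>"
  proof -
    have "cadj (A ** E) = cadj \<Lambda>" using AE by simp
    then show ?thesis by (simp only: cadj_mult cA cE cL)
  qed
  have LE: "\<Lambda> = l *\<^sub>R E"
    unfolding vec_eq_iff vector_scaleR_component by (simp add: \<Lambda>_def E_def outer_def scaleR_conv_of_real)
  obtain i0 where i0: "e $ i0 \<noteq> 0"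
  proof (rule ccontr)
    assume "\<not> thesis"
    then have "e $ i = 0" for i using that by blast
    then have "(\<Sum>i\<in>UNIV. cnj (e $ i) * e $ i) = 0" by simp
    with ne show False by simp
  qed
  have Enz: "E \<noteq> 0"
  proof
    assume "E = 0"
    then have "E $ i0 $ i0 = 0" by simp
    then show False using i0 by (simp add: E_def outer_def)
  qed
  show ?thesis
  proof (cases "\<forall>i<length Ws. A ** Ws ! i = 0")
    case True
    have "A ** A ** A = 0"
    proof (rule K, intro allI impI)
      fix i assume i: "i < length Ws"
      have cW: "cadj (Ws ! i) = Ws ! i" using op i unfolding orth_proj_def by blast
      have "cadj (A ** Ws ! i) = 0" using True i by (simp add: cadj_def vec_eq_iff)
      then have "Ws ! i ** A = 0" by (simp only: cadj_mult cA cW)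
      then show "Ws ! i ** A ** Ws ! i = 0" by (simp add: mzero_l)
    qed
    then have "(A ** A) ** (A ** A) = 0" by (simp add: matrix_mul_assoc mzero_r)
    moreover have "hermitian (A ** A)" by (simp add: hermitian_def cadj_mult cA)
    ultimately have "A ** A = 0" using herm_sq_zero by blast
    then have "A = 0" using herm_sq_zero h by blast
    with nz show ?thesis by simp
  next
    case False
    then obtain i where i: "i < length Ws" and AW: "A ** Ws ! i \<noteq> 0" by blast
    define W where "W = Ws ! i"
    have cW: "cadj W = W" and WW: "W ** W = W" using op i unfolding orth_proj_def W_def by blast+
    have "A ** W ** Y ** ((mat 1 - W) ** A) = 0" for Y
    proof -
      have "A ** (W ** Y ** (mat 1 - W)) ** A = 0"
      proof (rule K, intro allI impI)
        fix k assume k: "k < length Ws"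
        show "Ws ! k ** (W ** Y ** (mat 1 - W)) ** Ws ! k = 0"
        proof (cases "k = i")
          case True
          have "(mat 1 - W) ** W = 0" by (simp add: msub_r WW)
          then show ?thesis using True by (simp add: W_def[symmetric] matrix_mul_assoc[symmetric] mzero_r)
        next
          case False
          then have "Ws ! k ** W = 0" using orth k i unfolding W_def by blast
          then show ?thesis by (simp add: matrix_mul_assoc mzero_l)
        qed
      qed
      then show ?thesis by (simp add: matrix_mul_assoc)
    qed
    then have "A ** W = 0 \<or> (mat 1 - W) ** A = 0" using MYN[of "A ** W" "(mat 1 - W) ** A"] by blast
    then have "(mat 1 - W) ** A = 0" using AW W_def by blast
    then have WA: "W ** A = A" by (simp add: msub_r)
    have AW': "A ** W = A"
    proof -
      have "cadj (W ** A) = cadj A" using WA by simp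
      then show ?thesis by (simp only: cadj_mult cA cW)
    qed
    have We: "W *v e = e"
    proof -
      have "W *v (A *v e) = A *v e" by (simp add: matrix_vector_mul_assoc WA)
      then have "complex_of_real l *s (W *v e) = complex_of_real l *s e" by (simp add: eig mv_smult)
      then show ?thesis using lpos by simp
    qed
    have WE: "W ** E = E" unfolding E_def M_outer We by (simp add: outer_def vec_eq_iff)
    have EW: "E ** W = E"
    proof -
      have "cadj (W ** E) = cadj E" using WE by simp
      then show ?thesis by (simp only: cadj_mult cE cW)
    qed
    have oE: "orth_proj E" by (simp add: orth_proj_def cE EE)
    have sub: "corner E E \<subseteq> corner W W"
    proof
      fix Y assume "Y \<in> corner E E"
      then obtain X where Y: "Y = E ** X ** E" unfolding corner_def by blast
      have "W ** (E ** X ** E) ** W = (W ** E) ** X ** (E ** W)" by (simp add: matrix_mul_assoc)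
      then have "Y = W ** Y ** W" by (simp add: Y WE EW)
      then show "Y \<in> corner W W" unfolding corner_def by blast
    qed
    have inv: "(\<lambda>X. A ** X ** A) ` corner E E \<subseteq> corner E E"
    proof
      fix Y assume "Y \<in> (\<lambda>X. A ** X ** A) ` corner E E"
      then obtain X where Y: "Y = A ** (E ** X ** E) ** A" unfolding corner_def by blast
      have "A ** (E ** X ** E) ** A = (A ** E) ** X ** (E ** A)" by (simp add: matrix_mul_assoc)
      also have "\<dots> = (l *\<^sub>R E) ** X ** (l *\<^sub>R E)" by (simp only: AE EA LE)
      also have "\<dots> = E ** ((l * l) *\<^sub>R X) ** E"
        unfolding vec_eq_iff matrix_matrix_mult_def vec_lambda_beta vector_scaleR_component
        by (simp add: sum_distrib_left scaleR_conv_of_real mult_ac)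
      finally show "Y \<in> corner E E" unfolding corner_def Y by blast
    qed
    have "E = 0 \<or> E = W" using irr i oE sub inv unfolding irreducible_on_def W_def by blast
    then have "W = E" using Enz by simp
    then have "A = A ** E" using AW' by simp
    then show ?thesis using AE \<Lambda>_def by simp
  qed
qed


theorem mainTheorem8:
  fixes \<gamma> :: "complex^('k::finite \<times> 'm::finite)^('k \<times> 'm)"
  assumes "psd \<gamma>" and "rank \<gamma> = 1"
  shows "\<gamma> \<in> CR \<longleftrightarrow> (\<exists>(a::complex^'k) (b::complex^'m). \<gamma> = outer (kronv a b))"
proof
  assume "\<exists>(a::complex^'k) (b::complex^'m). \<gamma> = outer (kronv a b)"
  then obtain a b where "\<gamma> = outer (kronv (a::complex^'k) (b::complex^'m))" by blast
  then show "\<gamma> \<in> CR" using rev_main[OF assms(1)] by blast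
next
  assume CR: "\<gamma> \<in> CR"
  obtain c d where fac: "\<And>p q. \<gamma> $ p $ q = d $ p * c $ q" using rank1_factor[OF assms(2)] by blast
  have gnz: "\<gamma> \<noteq> 0" by (rule rank1_nz[OF assms(2)])
  have hg: "hermitian \<gamma>" using assms(1) by (simp add: psd_def)
  obtain v where gv: "\<gamma> = outer v"
    using rank1_outer[OF hg fac psd_diag[OF assms(1)] gnz] by blast
  define A where "A = Amat v"
  have T: "Fmap \<gamma> \<circ> Gmap \<gamma> = (\<lambda>X. A ** X ** A)"
    by (simp add: gv fun_eq_iff FG_outer A_def)
  have cr: "completely_reducible (\<lambda>X. A ** X ** A)" using CR T by (simp add: CR_def)
  have hA: "hermitian A" by (simp add: A_def Amat_def hermitian_def cadj_def vec_eq_iff mult.commute)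
  have "v \<noteq> 0" using gnz gv by (auto simp: outer_def vec_eq_iff)
  then obtain i0 j0 where v0: "v $ (i0, j0) \<noteq> 0" by (auto simp: vec_eq_iff)
  have Adiag: "A $ i0 $ i0 = complex_of_real (\<Sum>j\<in>UNIV. (cmod (v $ (i0, j)))\<^sup>2)"
    by (simp only: A_def Amat_def vec_lambda_beta of_real_sum complex_norm_square)
  have "(cmod (v $ (i0, j0)))\<^sup>2 \<le> (\<Sum>j\<in>UNIV. (cmod (v $ (i0, j)))\<^sup>2)"
    by (rule member_le_sum) auto
  moreover have "(cmod (v $ (i0, j0)))\<^sup>2 > 0" using v0 by simp
  moreover have "Re (A $ i0 $ i0) = (\<Sum>j\<in>UNIV. (cmod (v $ (i0, j)))\<^sup>2)"
    using Adiag by (simp only: Re_complex_of_real)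
  ultimately have dpos: "Re (A $ i0 $ i0) > 0" by linarith
  have Anz: "A \<noteq> 0" using dpos by auto
  obtain e l where ne: "(\<Sum>i\<in>UNIV. cnj (e $ i) * e $ i) = 1" and lpos: "l > 0"
    and eig: "A *v e = complex_of_real l *s e"
    using eigen_exists[OF hA dpos] by blast
  have AL: "A = (\<chi> i j. complex_of_real l * (e $ i * cnj (e $ j)))"
    by (rule fwd_b[OF cr hA Anz ne lpos eig])
  have "(\<Sum>j\<in>UNIV. v $ (i, j) * cnj (v $ (i', j))) = complex_of_real l * (e $ i * cnj (e $ i'))" for i i'
  proof -
    have "A $ i $ i' = complex_of_real l * (e $ i * cnj (e $ i'))" using AL by simp
    then show ?thesis by (simp add: A_def Amat_def)
  qed
  then obtain a b where "v = kronv a b" using fwd_c[OF ne] by blast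
  then show "\<exists>(a::complex^'k) (b::complex^'m). \<gamma> = outer (kronv a b)" using gv by blast
qed


end
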